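(* Let $L$ be a finite set of axis-aligned line segments in the plane, let $\mathcal{C}$ be the collection of associated subsets of the rectangular cells of the arrangement of $L$, and let $k\ge 0$ be an integer. Let $\mathcal{C}_1$ be obtained from $\mathcal{C}$ by, for every pair of segments $\ell,\ell'$ both contained in more than $2k$ subsets of $\mathcal{C}$, adding the subset $\{\ell,\ell'\}$ and removing all subsets containing both $\ell$ and $\ell'$. Let $\mathcal{C}_2$ be obtained from $\mathcal{C}_1$ by, for each segment $\ell$ contained in more than $2k^2$ subsets of $\mathcal{C}_1$, replacing all these subsets by the subset $\{\ell\}$. If $|\mathcal{C}_2| > 2k^3$, then there is no cover of $\mathcal{C}$ of size at most $k$.
   Context: A cell of the arrangement of $L$ is a maximal connected region of the plane not intersected by any segment of $L$. A cell is rectangular if its boundary is formed by exactly four segments of $L$; its associated subset is the set of these four bounding segments. A set $L'\subseteq L$ is a cover of a collection $\mathcal{D}$ of subsets of $L$ if every member of $\mathcal{D}$ contains at least one element of $L'$. *)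

theory Defs
  imports "HOL-Analysis.Analysis"
begin

type_synonym point = "real \<times> real"

definition axis_segment :: "point set \<Rightarrow> bool" where
  "axis_segment s \<longleftrightarrow> (\<exists>a b. a \<noteq> b \<and> (fst a = fst b \<or> snd a = snd b) \<and> s = closed_segment a b)"

definition cells :: "point set set \<Rightarrow> point set set" where
  "cells L = components (- \<Union>L)"

text \<open>Segments of L forming (a non-degenerate part of) the boundary of a cell.\<close>
definition bounding_segments :: "point set set \<Rightarrow> point set \<Rightarrow> point set set" where
  "bounding_segments L c = {s \<in> L. infinite (s \<inter> frontier c)}"

definition rectangular_cell :: "point set set \<Rightarrow> point set \<Rightarrow> bool" where
  "rectangular_cell L c \<longleftrightarrow> c \<in> cells L \<and> bounded c \<and>
     card (bounding_segments L c) = 4 \<and> frontier c \<subseteq> \<Union>(bounding_segments L c)"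

definition rect_subsets :: "point set set \<Rightarrow> point set set set" where
  "rect_subsets L = {bounding_segments L c | c. rectangular_cell L c}"

definition is_cover :: "'a set \<Rightarrow> 'a set set \<Rightarrow> 'a set \<Rightarrow> bool" where
  "is_cover L' D L \<longleftrightarrow> L' \<subseteq> L \<and> (\<forall>S\<in>D. S \<inter> L' \<noteq> {})"

definition heavy_pair :: "nat \<Rightarrow> 'a set set \<Rightarrow> 'a \<Rightarrow> 'a \<Rightarrow> bool" where
  "heavy_pair k C l l' \<longleftrightarrow> l \<noteq> l' \<and> card {S \<in> C. l \<in> S \<and> l' \<in> S} > 2 * k"

definition reduce1 :: "nat \<Rightarrow> 'a set set \<Rightarrow> 'a set set" where
  "reduce1 k C = {S \<in> C. \<not> (\<exists>l l'. heavy_pair k C l l' \<and> l \<in> S \<and> l' \<in> S)}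
                 \<union> {{l, l'} | l l'. heavy_pair k C l l'}"

definition heavy_elem :: "nat \<Rightarrow> 'a set set \<Rightarrow> 'a \<Rightarrow> bool" where
  "heavy_elem k C l \<longleftrightarrow> card {S \<in> C. l \<in> S} > 2 * k ^ 2"

definition reduce2 :: "nat \<Rightarrow> 'a set set \<Rightarrow> 'a set set" where
  "reduce2 k C = {S \<in> C. \<not> (\<exists>l\<in>S. heavy_elem k C l)} \<union> {{l} | l. heavy_elem k C l}"

end

theory Submission
  imports Defs
begin

lemma ray_exit:
  fixes c :: "'a::real_normed_vector set"
  assumes oc: "open c" and bc: "bounded c" and pc: "p \<in> c" and d: "d \<noteq> 0"
  shows "\<exists>t>0. p + t *\<^sub>R d \<in> frontier c"
proof -
  define T where "T = {t. 0 \<le> t \<and> p + t *\<^sub>R d \<notin> c}"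
  have clT: "closed T"
  proof -
    have "T = {0..} \<inter> (\<lambda>t. p + t *\<^sub>R d) -` (- c)" unfolding T_def by auto
    moreover have "closed ((\<lambda>t. p + t *\<^sub>R d) -` (- c))"
      by (rule continuous_closed_vimage) (use oc in \<open>auto intro!: continuous_intros\<close>)
    ultimately show ?thesis by auto
  qed
  obtain B where B: "\<forall>x\<in>c. norm x \<le> B" using bc bounded_iff by blast
  define t1 where "t1 = (B + norm p + 1) / norm d"
  have nd: "norm d > 0" using d by simp
  have "t1 * norm d = B + norm p + 1" unfolding t1_def using nd by simp
  moreover have "norm (p + t1 *\<^sub>R d) \<ge> t1 * norm d - norm p"
  proof -
    have "norm (t1 *\<^sub>R d) \<le> norm (p + t1 *\<^sub>R d) + norm p"
      by (metis add_diff_cancel_left' norm_triangle_ineq4)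
    moreover have "t1 \<ge> 0" unfolding t1_def using nd B pc
      by (smt (verit, best) divide_nonneg_pos norm_ge_zero)
    ultimately show ?thesis by simp
  qed
  ultimately have "norm (p + t1 *\<^sub>R d) > B" by linarith
  hence "p + t1 *\<^sub>R d \<notin> c" using B by auto
  moreover have "t1 \<ge> 0" unfolding t1_def using nd B pc
    by (smt (verit, best) divide_nonneg_pos norm_ge_zero)
  ultimately have "t1 \<in> T" unfolding T_def by auto
  hence neT: "T \<noteq> {}" by auto
  have bdT: "bdd_below T" unfolding T_def by (rule bdd_belowI[of _ 0]) auto
  define t0 where "t0 = Inf T"
  have t0T: "t0 \<in> T" unfolding t0_def using closed_contains_Inf[OF neT bdT clT] .
  have low: "\<And>u. 0 \<le> u \<Longrightarrow> u < t0 \<Longrightarrow> p + u *\<^sub>R d \<in> c"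
  proof (rule ccontr)
    fix u assume "0 \<le> u" "u < t0" "p + u *\<^sub>R d \<notin> c"
    hence "u \<in> T" unfolding T_def by auto
    hence "t0 \<le> u" unfolding t0_def using bdT by (simp add: cInf_lower)
    thus False using \<open>u < t0\<close> by simp
  qed
  have t0pos: "t0 > 0"
  proof -
    have "t0 \<ge> 0" using t0T unfolding T_def by auto
    moreover have "t0 \<noteq> 0" using t0T pc unfolding T_def by auto
    ultimately show ?thesis by simp
  qed
  have "p + t0 *\<^sub>R d \<in> closure c"
    unfolding closure_approachable
  proof (intro allI impI)
    fix e :: real assume e: "e > 0"
    define h where "h = min t0 (e / norm d) / 2"
    have h: "h > 0" "h < t0" "h * norm d < e" unfolding h_def using e nd t0pos
      by (auto simp: min_def field_simps)
    have "p + (t0 - h) *\<^sub>R d \<in> c" using low h by auto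
    moreover have "dist (p + (t0 - h) *\<^sub>R d) (p + t0 *\<^sub>R d) = h * norm d"
      using h by (simp add: dist_norm algebra_simps)
    ultimately show "\<exists>y\<in>c. dist y (p + t0 *\<^sub>R d) < e" using h by metis
  qed
  moreover have "p + t0 *\<^sub>R d \<notin> c" using t0T unfolding T_def by auto
  ultimately have "p + t0 *\<^sub>R d \<in> frontier c"
    using oc by (simp add: frontier_def interior_open)
  thus ?thesis using t0pos by blast
qed

lemma axis_cases:
  assumes "axis_segment s"
  obtains a b where "a \<noteq> b" "a \<in> s" "b \<in> s" "fst a = fst b" "s \<subseteq> {q. fst q = fst a}"
  | a b where "a \<noteq> b" "a \<in> s" "b \<in> s" "snd a = snd b" "s \<subseteq> {q. snd q = snd a}"
proof -
  obtain a b where ab: "a \<noteq> b" "fst a = fst b \<or> snd a = snd b" "s = closed_segment a b"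
    using assms unfolding axis_segment_def by blast
  show ?thesis
  proof (cases "fst a = fst b")
    case True
    have "s \<subseteq> {q. fst q = fst a}"
    proof
      fix x assume "x \<in> s"
      then obtain u where "x = (1 - u) *\<^sub>R a + u *\<^sub>R b" using ab by (auto simp: in_segment)
      hence "fst x = (1 - u) * fst a + u * fst b" by simp
      thus "x \<in> {q. fst q = fst a}" using True by (simp add: algebra_simps)
    qed
    thus ?thesis using that(1)[of a b] ab True by auto
  next
    case False
    hence "snd a = snd b" using ab by auto
    moreover have "s \<subseteq> {q. snd q = snd a}"
    proof
      fix x assume "x \<in> s"
      then obtain u where "x = (1 - u) *\<^sub>R a + u *\<^sub>R b" using ab by (auto simp: in_segment)
      hence "snd x = (1 - u) * snd a + u * snd b" by simp
      thus "x \<in> {q. snd q = snd a}" using \<open>snd a = snd b\<close> by (simp add: algebra_simps)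
    qed
    ultimately show ?thesis using that(2)[of a b] ab by auto
  qed
qed

lemma not_both_lines:
  assumes "axis_segment s" "s \<subseteq> {q. fst q = x}" "s \<subseteq> {q. snd q = y}"
  shows False
proof -
  obtain a b where "a \<noteq> b" "a \<in> s" "b \<in> s" using assms(1) unfolding axis_segment_def by auto
  thus False using assms(2,3) by (auto simp: prod_eq_iff)
qed

lemma rect_cell_box:
  assumes fin: "finite L" and ax: "\<forall>s\<in>L. axis_segment s" and rc: "rectangular_cell L c"
  obtains s1 s2 t1 t2 x1 x2 y1 y2 where "bounding_segments L c = {s1,s2,t1,t2}"
     "s1 \<subseteq> {q. fst q = x1}" "s2 \<subseteq> {q. fst q = x2}" "t1 \<subseteq> {q. snd q = y1}"
     "t2 \<subseteq> {q. snd q = y2}" "x1 < x2" "y1 < y2"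
     "{q. x1 < fst q \<and> fst q < x2 \<and> y1 < snd q \<and> snd q < y2} \<subseteq> c"
proof -
  define B where "B = bounding_segments L c"
  have BL: "B \<subseteq> L" unfolding B_def bounding_segments_def by auto
  have finB: "finite B" using fin BL finite_subset by auto
  have axB: "\<forall>s\<in>B. axis_segment s" using ax BL by auto
  have cB: "card B = 4" and frB: "frontier c \<subseteq> \<Union>B" and bc: "bounded c"
    and cc: "c \<in> components (- \<Union>L)"
    using rc unfolding rectangular_cell_def B_def cells_def by auto
  have "\<forall>s\<in>L. closed s" using ax unfolding axis_segment_def by auto
  hence clL: "closed (\<Union>L)" using fin by auto
  have oc: "open c" using open_components[OF _ cc] clL by auto
  have ne: "c \<noteq> {}" using in_components_nonempty cc by auto
  define X where "X = (\<lambda>s. fst (SOME q. q \<in> s)) ` B"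
  define Y where "Y = (\<lambda>s. snd (SOME q. q \<in> s)) ` B"
  have finX: "finite X" "finite Y" unfolding X_def Y_def using finB by auto
  obtain p where pc: "p \<in> c" "fst p \<notin> X" "snd p \<notin> Y"
  proof -
    obtain z where zc: "z \<in> c" using ne by auto
    obtain e where e: "e > 0" "ball z e \<subseteq> c" using oc zc open_contains_ball by blast
    have "infinite ({fst z - e/2<..<fst z + e/2} - X)"
      using e finX by (intro Diff_infinite_finite) auto
    then obtain x where x: "x \<in> {fst z - e/2<..<fst z + e/2}" "x \<notin> X"
      by (metis Diff_iff finite.emptyI ex_in_conv)
    have "infinite ({snd z - e/2<..<snd z + e/2} - Y)"
      using e finX by (intro Diff_infinite_finite) auto
    then obtain y where y: "y \<in> {snd z - e/2<..<snd z + e/2}" "y \<notin> Y"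
      by (metis Diff_iff finite.emptyI ex_in_conv)
    have "dist (x, y) z \<le> dist x (fst z) + dist y (snd z)"
    proof -
      have "dist (x, y) z = dist (x, y) (fst z, snd z)" by simp
      also have "\<dots> = sqrt ((dist x (fst z))\<^sup>2 + (dist y (snd z))\<^sup>2)" by (rule dist_Pair_Pair)
      also have "\<dots> \<le> dist x (fst z) + dist y (snd z)" by (rule sqrt_sum_squares_le_sum) auto
      finally show ?thesis .
    qed
    also have "\<dots> < e" using x y by (auto simp: dist_real_def abs_less_iff)
    finally have "(x, y) \<in> c" using e by (auto simp: dist_commute)
    thus ?thesis using that x y by auto
  qed
  have hitV: "\<exists>s\<in>B. s \<subseteq> {r. fst r = fst q}" if q: "q \<in> frontier c" "snd q = snd p" for q
  proof -
    obtain s where s: "s \<in> B" "q \<in> s" using q frB by auto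
    have "axis_segment s" using axB s by auto
    then show ?thesis
    proof (cases rule: axis_cases)
      case (1 a b)
      hence "fst q = fst a" using s by auto
      thus ?thesis using 1 s by (intro bexI[of _ s]) auto
    next
      case (2 a b)
      have "(SOME r. r \<in> s) \<in> s" using 2 by (metis someI)
      hence "snd (SOME r. r \<in> s) = snd a" using 2 by auto
      moreover have "snd q = snd a" using 2 s by auto
      ultimately have "snd p \<in> Y" unfolding Y_def using s q by force
      thus ?thesis using pc by auto
    qed
  qed
  have hitH: "\<exists>s\<in>B. s \<subseteq> {r. snd r = snd q}" if q: "q \<in> frontier c" "fst q = fst p" for q
  proof -
    obtain s where s: "s \<in> B" "q \<in> s" using q frB by auto
    have "axis_segment s" using axB s by auto
    then show ?thesis
    proof (cases rule: axis_cases)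
      case (2 a b)
      hence "snd q = snd a" using s by auto
      thus ?thesis using 2 s by (intro bexI[of _ s]) auto
    next
      case (1 a b)
      have "(SOME r. r \<in> s) \<in> s" using 1 by (metis someI)
      hence "fst (SOME r. r \<in> s) = fst a" using 1 by auto
      moreover have "fst q = fst a" using 1 s by auto
      ultimately have "fst p \<in> X" unfolding X_def using s q by force
      thus ?thesis using pc by auto
    qed
  qed
  obtain ta where ta: "ta > 0" "(fst p + ta, snd p) \<in> frontier c"
    using ray_exit[OF oc bc pc(1), of "(1,0)"] by (cases p) (auto simp: zero_prod_def)
  obtain tb where tb: "tb > 0" "(fst p - tb, snd p) \<in> frontier c"
    using ray_exit[OF oc bc pc(1), of "(-1,0)"] by (cases p) (auto simp: zero_prod_def)
  obtain tc where tc: "tc > 0" "(fst p, snd p + tc) \<in> frontier c"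
    using ray_exit[OF oc bc pc(1), of "(0,1)"] by (cases p) (auto simp: zero_prod_def)
  obtain td where td: "td > 0" "(fst p, snd p - td) \<in> frontier c"
    using ray_exit[OF oc bc pc(1), of "(0,-1)"] by (cases p) (auto simp: zero_prod_def)
  obtain s2 where s2: "s2 \<in> B" "s2 \<subseteq> {r. fst r = fst p + ta}"
    using hitV[OF ta(2)] by auto
  obtain s1 where s1: "s1 \<in> B" "s1 \<subseteq> {r. fst r = fst p - tb}"
    using hitV[OF tb(2)] by auto
  obtain t2 where t2: "t2 \<in> B" "t2 \<subseteq> {r. snd r = snd p + tc}"
    using hitH[OF tc(2)] by auto
  obtain t1 where t1: "t1 \<in> B" "t1 \<subseteq> {r. snd r = snd p - td}"
    using hitH[OF td(2)] by auto
  have nes: "\<And>s. s \<in> B \<Longrightarrow> s \<noteq> {}" using axB unfolding axis_segment_def by auto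
  have "s1 \<noteq> s2" using s1 s2 nes[OF s1(1)] ta tb by force
  moreover have "t1 \<noteq> t2" using t1 t2 nes[OF t1(1)] tc td by force
  moreover have "s1 \<noteq> t1" "s1 \<noteq> t2" "s2 \<noteq> t1" "s2 \<noteq> t2"
    using not_both_lines axB s1 s2 t1 t2 by metis+
  ultimately have "card {s1,s2,t1,t2} = 4" by auto
  hence Beq: "B = {s1,s2,t1,t2}" using s1 s2 t1 t2 cB finB
    by (metis card_subset_eq empty_subsetI insert_subset)
  define R where "R = {q::point. fst p - tb < fst q \<and> fst q < fst p + ta \<and> snd p - td < snd q \<and> snd q < snd p + tc}"
  have "R = {fst p - tb<..<fst p + ta} \<times> {snd p - td<..<snd p + tc}" unfolding R_def by auto
  hence "convex R" by (simp add: convex_Times)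
  hence conR: "connected R" by (simp add: convex_connected)
  have pR: "p \<in> R" unfolding R_def using ta tb tc td by auto
  have "R \<inter> frontier c = {}"
  proof -
    have "R \<inter> \<Union>B = {}"
    proof (rule ccontr)
      assume "R \<inter> \<Union>B \<noteq> {}"
      then obtain q where qR: "q \<in> R" and qB: "q \<in> \<Union>B" by blast
      then consider "q \<in> s1" | "q \<in> s2" | "q \<in> t1" | "q \<in> t2" using Beq by blast
      thus False using qR s1(2) s2(2) t1(2) t2(2) unfolding R_def by cases auto
    qed
    thus ?thesis using frB by blast
  qed
  hence Rc: "R \<subseteq> c" using connected_Int_frontier[OF conR, of c] pR pc by blast
  have lt: "fst p - tb < fst p + ta" "snd p - td < snd p + tc" using ta tb tc td by auto
  have Rc': "{q. fst p - tb < fst q \<and> fst q < fst p + ta \<and> snd p - td < snd q \<and> snd q < snd p + tc} \<subseteq> c"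
    using Rc unfolding R_def .
  show ?thesis
    by (rule that[of s1 s2 t1 t2 "fst p - tb" "fst p + ta" "snd p - td" "snd p + tc",
          OF Beq[unfolded B_def] s1(2) s2(2) t1(2) t2(2) lt Rc'])
qed


lemma cell_info:
  assumes fin: "finite L" and ax: "\<forall>s\<in>L. axis_segment s" and T: "T \<in> rect_subsets L"
  obtains c x1 x2 y1 y2 where "c \<in> components (- \<Union>L)" "T = bounding_segments L c"
   "x1 < x2" "y1 < y2"
   "{q. x1 < fst q \<and> fst q < x2 \<and> y1 < snd q \<and> snd q < y2} \<subseteq> c"
   "\<And>h y. h \<in> T \<Longrightarrow> h \<subseteq> {q. snd q = y} \<Longrightarrow> y = y1 \<or> y = y2"
   "\<And>h y. h \<in> T \<Longrightarrow> h \<subseteq> {q. fst q = y} \<Longrightarrow> y = x1 \<or> y = x2"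
   "\<And>h h' y y'. h \<in> T \<Longrightarrow> h' \<in> T \<Longrightarrow> h \<subseteq> {q. snd q = y} \<Longrightarrow> h' \<subseteq> {q. snd q = y'}
      \<Longrightarrow> h \<noteq> h' \<Longrightarrow> y \<noteq> y'"
   "\<And>h h' y y'. h \<in> T \<Longrightarrow> h' \<in> T \<Longrightarrow> h \<subseteq> {q. fst q = y} \<Longrightarrow> h' \<subseteq> {q. fst q = y'}
      \<Longrightarrow> h \<noteq> h' \<Longrightarrow> y \<noteq> y'"
proof -
  obtain c where rc: "rectangular_cell L c" and Tc: "T = bounding_segments L c"
    using T unfolding rect_subsets_def by auto
  have cc: "c \<in> components (- \<Union>L)" using rc unfolding rectangular_cell_def cells_def by auto
  obtain s1 s2 t1 t2 x1 x2 y1 y2 where B: "bounding_segments L c = {s1,s2,t1,t2}" and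
     ls: "s1 \<subseteq> {q. fst q = x1}" "s2 \<subseteq> {q. fst q = x2}" "t1 \<subseteq> {q. snd q = y1}"
     "t2 \<subseteq> {q. snd q = y2}" and lt: "x1 < x2" "y1 < y2" and
     box: "{q. x1 < fst q \<and> fst q < x2 \<and> y1 < snd q \<and> snd q < y2} \<subseteq> c"
    by (rule rect_cell_box[OF fin ax rc])
  have TL: "T \<subseteq> L" unfolding Tc bounding_segments_def by auto
  have axT: "\<And>h. h \<in> T \<Longrightarrow> axis_segment h" using TL ax by auto
  have neT: "\<And>h. h \<in> T \<Longrightarrow> h \<noteq> {}" using axT unfolding axis_segment_def by auto
  have clH: "(h = t1 \<and> y = y1) \<or> (h = t2 \<and> y = y2)" if h: "h \<in> T" "h \<subseteq> {q. snd q = y}" for h y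
  proof -
    have "h \<noteq> s1" using not_both_lines[OF axT[OF h(1)] _ h(2)] ls by auto
    moreover have "h \<noteq> s2" using not_both_lines[OF axT[OF h(1)] _ h(2)] ls by auto
    ultimately have "h = t1 \<or> h = t2" using h B Tc by auto
    moreover obtain r where "r \<in> h" using neT[OF h(1)] by auto
    ultimately show ?thesis using h ls by auto
  qed
  have clV: "(h = s1 \<and> y = x1) \<or> (h = s2 \<and> y = x2)" if h: "h \<in> T" "h \<subseteq> {q. fst q = y}" for h y
  proof -
    have "h \<noteq> t1" using not_both_lines[OF axT[OF h(1)] h(2)] ls by auto
    moreover have "h \<noteq> t2" using not_both_lines[OF axT[OF h(1)] h(2)] ls by auto
    ultimately have "h = s1 \<or> h = s2" using h B Tc by auto
    moreover obtain r where "r \<in> h" using neT[OF h(1)] by auto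
    ultimately show ?thesis using h ls by auto
  qed
  show ?thesis
  proof (rule that[OF cc Tc lt box])
    show "\<And>h y. h \<in> T \<Longrightarrow> h \<subseteq> {q. snd q = y} \<Longrightarrow> y = y1 \<or> y = y2" using clH by blast
    show "\<And>h y. h \<in> T \<Longrightarrow> h \<subseteq> {q. fst q = y} \<Longrightarrow> y = x1 \<or> y = x2" using clV by blast
    show "\<And>h h' y y'. h \<in> T \<Longrightarrow> h' \<in> T \<Longrightarrow> h \<subseteq> {q. snd q = y} \<Longrightarrow> h' \<subseteq> {q. snd q = y'}
      \<Longrightarrow> h \<noteq> h' \<Longrightarrow> y \<noteq> y'"
    proof -
      fix h h' y y' assume a: "h \<in> T" "h' \<in> T" "h \<subseteq> {q. snd q = y}" "h' \<subseteq> {q. snd q = y'}" "h \<noteq> h'"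
      show "y \<noteq> y'" using clH[OF a(1,3)] clH[OF a(2,4)] a(5) lt by auto
    qed
    show "\<And>h h' y y'. h \<in> T \<Longrightarrow> h' \<in> T \<Longrightarrow> h \<subseteq> {q. fst q = y} \<Longrightarrow> h' \<subseteq> {q. fst q = y'}
      \<Longrightarrow> h \<noteq> h' \<Longrightarrow> y \<noteq> y'"
    proof -
      fix h h' y y' assume a: "h \<in> T" "h' \<in> T" "h \<subseteq> {q. fst q = y}" "h' \<subseteq> {q. fst q = y'}" "h \<noteq> h'"
      show "y \<noteq> y'" using clV[OF a(1,3)] clV[OF a(2,4)] a(5) lt by auto
    qed
  qed
qed

lemma boxes_meetX:
  fixes x1 x2 x1' x2' y1 y2 :: real
  assumes "c \<in> components U" "c' \<in> components U"
    "{q. x1 < fst q \<and> fst q < x2 \<and> y1 < snd q \<and> snd q < y2} \<subseteq> c"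
    "{q. x1' < fst q \<and> fst q < x2' \<and> y1 < snd q \<and> snd q < y2} \<subseteq> c'"
    "x1 < x2" "x1' < x2'" "y1 < y2" "x1 = x1' \<or> x2 = x2'"
  shows "c = c'"
proof -
  define y where "y = (y1 + y2) / 2"
  obtain x where "x1 < x" "x < x2" "x1' < x" "x < x2'"
  proof (cases "x1 = x1'")
    case True
    have "x1 < x1 + min (x2 - x1) (x2' - x1) / 2" "x1 + min (x2 - x1) (x2' - x1) / 2 < x2"
      "x1' < x1 + min (x2 - x1) (x2' - x1) / 2" "x1 + min (x2 - x1) (x2' - x1) / 2 < x2'"
      using True assms(5,6) by (auto simp: min_def field_simps)
    thus ?thesis by (rule that)
  next
    case False
    hence "x2 = x2'" using assms(8) by auto
    have "x1 < x2 - min (x2 - x1) (x2 - x1') / 2" "x2 - min (x2 - x1) (x2 - x1') / 2 < x2"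
      "x1' < x2 - min (x2 - x1) (x2 - x1') / 2" "x2 - min (x2 - x1) (x2 - x1') / 2 < x2'"
      using \<open>x2 = x2'\<close> assms(5,6) by (auto simp: min_def field_simps)
    thus ?thesis by (rule that)
  qed
  hence "(x, y) \<in> c \<inter> c'" using assms(3,4,7) unfolding y_def by auto
  thus ?thesis using components_eq[OF assms(1,2)] by auto
qed

lemma boxes_meetY:
  fixes x1 x2 y1' y2' y1 y2 :: real
  assumes "c \<in> components U" "c' \<in> components U"
    "{q. x1 < fst q \<and> fst q < x2 \<and> y1 < snd q \<and> snd q < y2} \<subseteq> c"
    "{q. x1 < fst q \<and> fst q < x2 \<and> y1' < snd q \<and> snd q < y2'} \<subseteq> c'"
    "y1 < y2" "y1' < y2'" "x1 < x2" "y1 = y1' \<or> y2 = y2'"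
  shows "c = c'"
proof -
  define x where "x = (x1 + x2) / 2"
  obtain y where "y1 < y" "y < y2" "y1' < y" "y < y2'"
  proof (cases "y1 = y1'")
    case True
    have "y1 < y1 + min (y2 - y1) (y2' - y1) / 2" "y1 + min (y2 - y1) (y2' - y1) / 2 < y2"
      "y1' < y1 + min (y2 - y1) (y2' - y1) / 2" "y1 + min (y2 - y1) (y2' - y1) / 2 < y2'"
      using True assms(5,6) by (auto simp: min_def field_simps)
    thus ?thesis by (rule that)
  next
    case False
    hence "y2 = y2'" using assms(8) by auto
    have "y1 < y2 - min (y2 - y1) (y2 - y1') / 2" "y2 - min (y2 - y1) (y2 - y1') / 2 < y2"
      "y1' < y2 - min (y2 - y1) (y2 - y1') / 2" "y2 - min (y2 - y1) (y2 - y1') / 2 < y2'"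
      using \<open>y2 = y2'\<close> assms(5,6) by (auto simp: min_def field_simps)
    thus ?thesis by (rule that)
  qed
  hence "(x, y) \<in> c \<inter> c'" using assms(3,4,7) unfolding x_def by auto
  thus ?thesis using components_eq[OF assms(1,2)] by auto
qed


lemma pairH:
  assumes fin: "finite L" and ax: "\<forall>s\<in>L. axis_segment s"
    and T: "T1 \<in> rect_subsets L" "T2 \<in> rect_subsets L" "T3 \<in> rect_subsets L"
      "T1 \<noteq> T2" "T1 \<noteq> T3" "T2 \<noteq> T3"
    and m: "{p1,p2,q} \<subseteq> T1" "{p1,p2,q} \<subseteq> T2" "{p1,p2,q} \<subseteq> T3"
    and d: "p1 \<noteq> p2" "p1 \<subseteq> {r. snd r = ya}" "p2 \<subseteq> {r. snd r = yb}" "q \<subseteq> {r. fst r = xq}"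
  shows False
proof -
  obtain c1 x11 x21 y11 y21 where c1: "c1 \<in> components (- \<Union>L)" "T1 = bounding_segments L c1"
   "x11 < x21" "y11 < y21"
   "{q. x11 < fst q \<and> fst q < x21 \<and> y11 < snd q \<and> snd q < y21} \<subseteq> c1"
   "\<And>h y. h \<in> T1 \<Longrightarrow> h \<subseteq> {q. snd q = y} \<Longrightarrow> y = y11 \<or> y = y21"
   "\<And>h y. h \<in> T1 \<Longrightarrow> h \<subseteq> {q. fst q = y} \<Longrightarrow> y = x11 \<or> y = x21"
   "\<And>h h' y y'. h \<in> T1 \<Longrightarrow> h' \<in> T1 \<Longrightarrow> h \<subseteq> {q. snd q = y} \<Longrightarrow> h' \<subseteq> {q. snd q = y'}
      \<Longrightarrow> h \<noteq> h' \<Longrightarrow> y \<noteq> y'"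
   "\<And>h h' y y'. h \<in> T1 \<Longrightarrow> h' \<in> T1 \<Longrightarrow> h \<subseteq> {q. fst q = y} \<Longrightarrow> h' \<subseteq> {q. fst q = y'}
      \<Longrightarrow> h \<noteq> h' \<Longrightarrow> y \<noteq> y'"
    using cell_info[OF fin ax T(1)] by blast
  obtain c2 x12 x22 y12 y22 where c2: "c2 \<in> components (- \<Union>L)" "T2 = bounding_segments L c2"
   "x12 < x22" "y12 < y22"
   "{q. x12 < fst q \<and> fst q < x22 \<and> y12 < snd q \<and> snd q < y22} \<subseteq> c2"
   "\<And>h y. h \<in> T2 \<Longrightarrow> h \<subseteq> {q. snd q = y} \<Longrightarrow> y = y12 \<or> y = y22"
   "\<And>h y. h \<in> T2 \<Longrightarrow> h \<subseteq> {q. fst q = y} \<Longrightarrow> y = x12 \<or> y = x22"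
   "\<And>h h' y y'. h \<in> T2 \<Longrightarrow> h' \<in> T2 \<Longrightarrow> h \<subseteq> {q. snd q = y} \<Longrightarrow> h' \<subseteq> {q. snd q = y'}
      \<Longrightarrow> h \<noteq> h' \<Longrightarrow> y \<noteq> y'"
   "\<And>h h' y y'. h \<in> T2 \<Longrightarrow> h' \<in> T2 \<Longrightarrow> h \<subseteq> {q. fst q = y} \<Longrightarrow> h' \<subseteq> {q. fst q = y'}
      \<Longrightarrow> h \<noteq> h' \<Longrightarrow> y \<noteq> y'"
    using cell_info[OF fin ax T(2)] by blast
  obtain c3 x13 x23 y13 y23 where c3: "c3 \<in> components (- \<Union>L)" "T3 = bounding_segments L c3"
   "x13 < x23" "y13 < y23"
   "{q. x13 < fst q \<and> fst q < x23 \<and> y13 < snd q \<and> snd q < y23} \<subseteq> c3"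
   "\<And>h y. h \<in> T3 \<Longrightarrow> h \<subseteq> {q. snd q = y} \<Longrightarrow> y = y13 \<or> y = y23"
   "\<And>h y. h \<in> T3 \<Longrightarrow> h \<subseteq> {q. fst q = y} \<Longrightarrow> y = x13 \<or> y = x23"
   "\<And>h h' y y'. h \<in> T3 \<Longrightarrow> h' \<in> T3 \<Longrightarrow> h \<subseteq> {q. snd q = y} \<Longrightarrow> h' \<subseteq> {q. snd q = y'}
      \<Longrightarrow> h \<noteq> h' \<Longrightarrow> y \<noteq> y'"
   "\<And>h h' y y'. h \<in> T3 \<Longrightarrow> h' \<in> T3 \<Longrightarrow> h \<subseteq> {q. fst q = y} \<Longrightarrow> h' \<subseteq> {q. fst q = y'}
      \<Longrightarrow> h \<noteq> h' \<Longrightarrow> y \<noteq> y'"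
    using cell_info[OF fin ax T(3)] by blast
  have ne: "ya \<noteq> yb" using c1(8)[of p1 p2 ya yb] m d by auto
  have Y1: "y11 = min ya yb" "y21 = max ya yb"
    using c1(6)[of p1 ya] c1(6)[of p2 yb] m(1) d ne c1(4) by (auto simp: min_def max_def)
  have Y2: "y12 = min ya yb" "y22 = max ya yb"
    using c2(6)[of p1 ya] c2(6)[of p2 yb] m(2) d ne c2(4) by (auto simp: min_def max_def)
  have Y3: "y13 = min ya yb" "y23 = max ya yb"
    using c3(6)[of p1 ya] c3(6)[of p2 yb] m(3) d ne c3(4) by (auto simp: min_def max_def)
  have lt: "min ya yb < max ya yb" using ne by (auto simp: min_def max_def)
  have X: "xq = x11 \<or> xq = x21" "xq = x12 \<or> xq = x22" "xq = x13 \<or> xq = x23"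
    using c1(7)[of q xq] c2(7)[of q xq] c3(7)[of q xq] m d by auto
  have e12: "\<not> (x11 = x12 \<or> x21 = x22)"
  proof
    assume "x11 = x12 \<or> x21 = x22"
    hence "c1 = c2" using boxes_meetX[OF c1(1) c2(1) c1(5)[unfolded Y1] c2(5)[unfolded Y2]
      c1(3) c2(3) lt] by blast
    thus False using c1(2) c2(2) T(4) by simp
  qed
  have e13: "\<not> (x11 = x13 \<or> x21 = x23)"
  proof
    assume "x11 = x13 \<or> x21 = x23"
    hence "c1 = c3" using boxes_meetX[OF c1(1) c3(1) c1(5)[unfolded Y1] c3(5)[unfolded Y3]
      c1(3) c3(3) lt] by blast
    thus False using c1(2) c3(2) T(5) by simp
  qed
  have e23: "\<not> (x12 = x13 \<or> x22 = x23)"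
  proof
    assume "x12 = x13 \<or> x22 = x23"
    hence "c2 = c3" using boxes_meetX[OF c2(1) c3(1) c2(5)[unfolded Y2] c3(5)[unfolded Y3]
      c2(3) c3(3) lt] by blast
    thus False using c2(2) c3(2) T(6) by simp
  qed
  show False using X e12 e13 e23 by metis
qed


lemma pairV:
  assumes fin: "finite L" and ax: "\<forall>s\<in>L. axis_segment s"
    and T: "T1 \<in> rect_subsets L" "T2 \<in> rect_subsets L" "T3 \<in> rect_subsets L"
      "T1 \<noteq> T2" "T1 \<noteq> T3" "T2 \<noteq> T3"
    and m: "{p1,p2,q} \<subseteq> T1" "{p1,p2,q} \<subseteq> T2" "{p1,p2,q} \<subseteq> T3"
    and d: "p1 \<noteq> p2" "p1 \<subseteq> {r. fst r = ya}" "p2 \<subseteq> {r. fst r = yb}" "q \<subseteq> {r. snd r = xq}"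
  shows False
proof -
  obtain c1 x11 x21 y11 y21 where c1: "c1 \<in> components (- \<Union>L)" "T1 = bounding_segments L c1"
   "x11 < x21" "y11 < y21"
   "{q. x11 < fst q \<and> fst q < x21 \<and> y11 < snd q \<and> snd q < y21} \<subseteq> c1"
   "\<And>h y. h \<in> T1 \<Longrightarrow> h \<subseteq> {q. snd q = y} \<Longrightarrow> y = y11 \<or> y = y21"
   "\<And>h y. h \<in> T1 \<Longrightarrow> h \<subseteq> {q. fst q = y} \<Longrightarrow> y = x11 \<or> y = x21"
   "\<And>h h' y y'. h \<in> T1 \<Longrightarrow> h' \<in> T1 \<Longrightarrow> h \<subseteq> {q. snd q = y} \<Longrightarrow> h' \<subseteq> {q. snd q = y'}
      \<Longrightarrow> h \<noteq> h' \<Longrightarrow> y \<noteq> y'"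
   "\<And>h h' y y'. h \<in> T1 \<Longrightarrow> h' \<in> T1 \<Longrightarrow> h \<subseteq> {q. fst q = y} \<Longrightarrow> h' \<subseteq> {q. fst q = y'}
      \<Longrightarrow> h \<noteq> h' \<Longrightarrow> y \<noteq> y'"
    using cell_info[OF fin ax T(1)] by blast
  obtain c2 x12 x22 y12 y22 where c2: "c2 \<in> components (- \<Union>L)" "T2 = bounding_segments L c2"
   "x12 < x22" "y12 < y22"
   "{q. x12 < fst q \<and> fst q < x22 \<and> y12 < snd q \<and> snd q < y22} \<subseteq> c2"
   "\<And>h y. h \<in> T2 \<Longrightarrow> h \<subseteq> {q. snd q = y} \<Longrightarrow> y = y12 \<or> y = y22"
   "\<And>h y. h \<in> T2 \<Longrightarrow> h \<subseteq> {q. fst q = y} \<Longrightarrow> y = x12 \<or> y = x22"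
   "\<And>h h' y y'. h \<in> T2 \<Longrightarrow> h' \<in> T2 \<Longrightarrow> h \<subseteq> {q. snd q = y} \<Longrightarrow> h' \<subseteq> {q. snd q = y'}
      \<Longrightarrow> h \<noteq> h' \<Longrightarrow> y \<noteq> y'"
   "\<And>h h' y y'. h \<in> T2 \<Longrightarrow> h' \<in> T2 \<Longrightarrow> h \<subseteq> {q. fst q = y} \<Longrightarrow> h' \<subseteq> {q. fst q = y'}
      \<Longrightarrow> h \<noteq> h' \<Longrightarrow> y \<noteq> y'"
    using cell_info[OF fin ax T(2)] by blast
  obtain c3 x13 x23 y13 y23 where c3: "c3 \<in> components (- \<Union>L)" "T3 = bounding_segments L c3"
   "x13 < x23" "y13 < y23"
   "{q. x13 < fst q \<and> fst q < x23 \<and> y13 < snd q \<and> snd q < y23} \<subseteq> c3"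
   "\<And>h y. h \<in> T3 \<Longrightarrow> h \<subseteq> {q. snd q = y} \<Longrightarrow> y = y13 \<or> y = y23"
   "\<And>h y. h \<in> T3 \<Longrightarrow> h \<subseteq> {q. fst q = y} \<Longrightarrow> y = x13 \<or> y = x23"
   "\<And>h h' y y'. h \<in> T3 \<Longrightarrow> h' \<in> T3 \<Longrightarrow> h \<subseteq> {q. snd q = y} \<Longrightarrow> h' \<subseteq> {q. snd q = y'}
      \<Longrightarrow> h \<noteq> h' \<Longrightarrow> y \<noteq> y'"
   "\<And>h h' y y'. h \<in> T3 \<Longrightarrow> h' \<in> T3 \<Longrightarrow> h \<subseteq> {q. fst q = y} \<Longrightarrow> h' \<subseteq> {q. fst q = y'}
      \<Longrightarrow> h \<noteq> h' \<Longrightarrow> y \<noteq> y'"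
    using cell_info[OF fin ax T(3)] by blast
  have ne: "ya \<noteq> yb" using c1(9)[of p1 p2 ya yb] m d by auto
  have Y1: "x11 = min ya yb" "x21 = max ya yb"
    using c1(7)[of p1 ya] c1(7)[of p2 yb] m(1) d ne c1(3) by (auto simp: min_def max_def)
  have Y2: "x12 = min ya yb" "x22 = max ya yb"
    using c2(7)[of p1 ya] c2(7)[of p2 yb] m(2) d ne c2(3) by (auto simp: min_def max_def)
  have Y3: "x13 = min ya yb" "x23 = max ya yb"
    using c3(7)[of p1 ya] c3(7)[of p2 yb] m(3) d ne c3(3) by (auto simp: min_def max_def)
  have lt: "min ya yb < max ya yb" using ne by (auto simp: min_def max_def)
  have X: "xq = y11 \<or> xq = y21" "xq = y12 \<or> xq = y22" "xq = y13 \<or> xq = y23"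
    using c1(6)[of q xq] c2(6)[of q xq] c3(6)[of q xq] m d by auto
  have e12: "\<not> (y11 = y12 \<or> y21 = y22)"
  proof
    assume "y11 = y12 \<or> y21 = y22"
    hence "c1 = c2" using boxes_meetY[OF c1(1) c2(1) c1(5)[unfolded Y1] c2(5)[unfolded Y2]
      c1(4) c2(4) lt] by blast
    thus False using c1(2) c2(2) T(4) by simp
  qed
  have e13: "\<not> (y11 = y13 \<or> y21 = y23)"
  proof
    assume "y11 = y13 \<or> y21 = y23"
    hence "c1 = c3" using boxes_meetY[OF c1(1) c3(1) c1(5)[unfolded Y1] c3(5)[unfolded Y3]
      c1(4) c3(4) lt] by blast
    thus False using c1(2) c3(2) T(5) by simp
  qed
  have e23: "\<not> (y12 = y13 \<or> y22 = y23)"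
  proof
    assume "y12 = y13 \<or> y22 = y23"
    hence "c2 = c3" using boxes_meetY[OF c2(1) c3(1) c2(5)[unfolded Y2] c3(5)[unfolded Y3]
      c2(4) c3(4) lt] by blast
    thus False using c2(2) c3(2) T(6) by simp
  qed
  show False using X e12 e13 e23 by metis
qed

lemma no_triple:
  assumes fin: "finite L" and ax: "\<forall>s\<in>L. axis_segment s"
    and T: "T1 \<in> rect_subsets L" "T2 \<in> rect_subsets L" "T3 \<in> rect_subsets L"
      "T1 \<noteq> T2" "T1 \<noteq> T3" "T2 \<noteq> T3"
    and m: "{l,l',n} \<subseteq> T1" "{l,l',n} \<subseteq> T2" "{l,l',n} \<subseteq> T3"
    and d: "l \<noteq> l'" "l \<noteq> n" "l' \<noteq> n"
  shows False
proof -
  have TL: "T1 \<subseteq> L" using T(1) unfolding rect_subsets_def bounding_segments_def by auto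
  have or: "(\<exists>x. s \<subseteq> {r. fst r = x}) \<or> (\<exists>y. s \<subseteq> {r. snd r = y})" if "s \<in> T1" for s
  proof -
    have "axis_segment s" using that TL ax by auto
    thus ?thesis
    proof (cases rule: axis_cases)
      case (1 a b) thus ?thesis by blast
    next
      case (2 a b) thus ?thesis by blast
    qed
  qed
  have mem: "l \<in> T1" "l' \<in> T1" "n \<in> T1" using m by auto
  obtain c1 x11 x21 y11 y21 where c1: "c1 \<in> components (- \<Union>L)" "T1 = bounding_segments L c1"
   "x11 < x21" "y11 < y21"
   "{q. x11 < fst q \<and> fst q < x21 \<and> y11 < snd q \<and> snd q < y21} \<subseteq> c1"
   "\<And>h y. h \<in> T1 \<Longrightarrow> h \<subseteq> {q. snd q = y} \<Longrightarrow> y = y11 \<or> y = y21"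
   "\<And>h y. h \<in> T1 \<Longrightarrow> h \<subseteq> {q. fst q = y} \<Longrightarrow> y = x11 \<or> y = x21"
   "\<And>h h' y y'. h \<in> T1 \<Longrightarrow> h' \<in> T1 \<Longrightarrow> h \<subseteq> {q. snd q = y} \<Longrightarrow> h' \<subseteq> {q. snd q = y'}
      \<Longrightarrow> h \<noteq> h' \<Longrightarrow> y \<noteq> y'"
   "\<And>h h' y y'. h \<in> T1 \<Longrightarrow> h' \<in> T1 \<Longrightarrow> h \<subseteq> {q. fst q = y} \<Longrightarrow> h' \<subseteq> {q. fst q = y'}
      \<Longrightarrow> h \<noteq> h' \<Longrightarrow> y \<noteq> y'"
    using cell_info[OF fin ax T(1)] by blast
  have or0: "(\<exists>x. l \<subseteq> {r. fst r = x}) \<or> (\<exists>y. l \<subseteq> {r. snd r = y})" using or m by auto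
  have or1: "(\<exists>x. l' \<subseteq> {r. fst r = x}) \<or> (\<exists>y. l' \<subseteq> {r. snd r = y})" using or m by auto
  have or2: "(\<exists>x. n \<subseteq> {r. fst r = x}) \<or> (\<exists>y. n \<subseteq> {r. snd r = y})" using or m by auto
  from or0 show False
  proof
    assume h0: "\<exists>x. l \<subseteq> {r. fst r = x}"
    from or1 show False
    proof
      assume h1: "\<exists>x. l' \<subseteq> {r. fst r = x}"
      from or2 show False
      proof
        assume h2: "\<exists>x. n \<subseteq> {r. fst r = x}"
        obtain x0 where o0: "l \<subseteq> {r. fst r = x0}" using h0 by blast
        obtain x1 where o1: "l' \<subseteq> {r. fst r = x1}" using h1 by blast
        obtain x2 where o2: "n \<subseteq> {r. fst r = x2}" using h2 by blast
        show False using c1(7)[OF mem(1) o0] c1(7)[OF mem(2) o1] c1(7)[OF mem(3) o2] c1(9)[OF mem(1) mem(2) o0 o1 d(1)] c1(9)[OF mem(1) mem(3) o0 o2 d(2)] c1(9)[OF mem(2) mem(3) o1 o2 d(3)] by metis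
      next
        assume h2: "\<exists>y. n \<subseteq> {r. snd r = y}"
        obtain x0 where o0: "l \<subseteq> {r. fst r = x0}" using h0 by blast
        obtain x1 where o1: "l' \<subseteq> {r. fst r = x1}" using h1 by blast
        obtain y2 where o2: "n \<subseteq> {r. snd r = y2}" using h2 by blast
        show False by (rule pairV[OF fin ax T, of "l" "l'" "n" x0 x1 y2]) (use m d o0 o1 o2 in auto)
      qed
    next
      assume h1: "\<exists>y. l' \<subseteq> {r. snd r = y}"
      from or2 show False
      proof
        assume h2: "\<exists>x. n \<subseteq> {r. fst r = x}"
        obtain x0 where o0: "l \<subseteq> {r. fst r = x0}" using h0 by blast
        obtain y1 where o1: "l' \<subseteq> {r. snd r = y1}" using h1 by blast
        obtain x2 where o2: "n \<subseteq> {r. fst r = x2}" using h2 by blast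
        show False by (rule pairV[OF fin ax T, of "l" "n" "l'" x0 x2 y1]) (use m d o0 o2 o1 in auto)
      next
        assume h2: "\<exists>y. n \<subseteq> {r. snd r = y}"
        obtain x0 where o0: "l \<subseteq> {r. fst r = x0}" using h0 by blast
        obtain y1 where o1: "l' \<subseteq> {r. snd r = y1}" using h1 by blast
        obtain y2 where o2: "n \<subseteq> {r. snd r = y2}" using h2 by blast
        show False by (rule pairH[OF fin ax T, of "l'" "n" "l" y1 y2 x0]) (use m d o1 o2 o0 in auto)
      qed
    qed
  next
    assume h0: "\<exists>y. l \<subseteq> {r. snd r = y}"
    from or1 show False
    proof
      assume h1: "\<exists>x. l' \<subseteq> {r. fst r = x}"
      from or2 show False
      proof
        assume h2: "\<exists>x. n \<subseteq> {r. fst r = x}"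
        obtain y0 where o0: "l \<subseteq> {r. snd r = y0}" using h0 by blast
        obtain x1 where o1: "l' \<subseteq> {r. fst r = x1}" using h1 by blast
        obtain x2 where o2: "n \<subseteq> {r. fst r = x2}" using h2 by blast
        show False by (rule pairV[OF fin ax T, of "l'" "n" "l" x1 x2 y0]) (use m d o1 o2 o0 in auto)
      next
        assume h2: "\<exists>y. n \<subseteq> {r. snd r = y}"
        obtain y0 where o0: "l \<subseteq> {r. snd r = y0}" using h0 by blast
        obtain x1 where o1: "l' \<subseteq> {r. fst r = x1}" using h1 by blast
        obtain y2 where o2: "n \<subseteq> {r. snd r = y2}" using h2 by blast
        show False by (rule pairH[OF fin ax T, of "l" "n" "l'" y0 y2 x1]) (use m d o0 o2 o1 in auto)
      qed
    next
      assume h1: "\<exists>y. l' \<subseteq> {r. snd r = y}"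
      from or2 show False
      proof
        assume h2: "\<exists>x. n \<subseteq> {r. fst r = x}"
        obtain y0 where o0: "l \<subseteq> {r. snd r = y0}" using h0 by blast
        obtain y1 where o1: "l' \<subseteq> {r. snd r = y1}" using h1 by blast
        obtain x2 where o2: "n \<subseteq> {r. fst r = x2}" using h2 by blast
        show False by (rule pairH[OF fin ax T, of "l" "l'" "n" y0 y1 x2]) (use m d o0 o1 o2 in auto)
      next
        assume h2: "\<exists>y. n \<subseteq> {r. snd r = y}"
        obtain y0 where o0: "l \<subseteq> {r. snd r = y0}" using h0 by blast
        obtain y1 where o1: "l' \<subseteq> {r. snd r = y1}" using h1 by blast
        obtain y2 where o2: "n \<subseteq> {r. snd r = y2}" using h2 by blast
        show False using c1(6)[OF mem(1) o0] c1(6)[OF mem(2) o1] c1(6)[OF mem(3) o2] c1(8)[OF mem(1) mem(2) o0 o1 d(1)] c1(8)[OF mem(1) mem(3) o0 o2 d(2)] c1(8)[OF mem(2) mem(3) o1 o2 d(3)] by metis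
      qed
    qed
  qed
qed


lemma three_elems:
  assumes "finite A" "card A \<ge> 3"
  obtains a b c where "a \<in> A" "b \<in> A" "c \<in> A" "a \<noteq> b" "a \<noteq> c" "b \<noteq> c"
proof -
  obtain a where a: "a \<in> A" using assms by fastforce
  have "card (A - {a}) \<ge> 2" using assms a by simp
  hence "A - {a} \<noteq> {}" by (metis card.empty not_numeral_le_zero)
  then obtain b where b: "b \<in> A - {a}" by blast
  have "card (A - {a} - {b}) \<ge> 1" using assms a b by (simp add: card_Diff_singleton)
  hence "A - {a} - {b} \<noteq> {}" by (metis card.empty not_one_le_zero)
  then obtain c where c: "c \<in> A - {a} - {b}" by blast
  show ?thesis using that a b c by blast
qed

lemma rect_subsets_Pow: "rect_subsets L \<subseteq> Pow L"
  unfolding rect_subsets_def bounding_segments_def by auto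

lemma heavy_pair_sym: "heavy_pair k C l l' \<longleftrightarrow> heavy_pair k C l' l"
  unfolding heavy_pair_def by (metis (no_types, lifting) Collect_cong)

theorem lemma5:
  fixes L :: "point set set" and k :: nat
  assumes "finite L"
    and "\<forall>s\<in>L. axis_segment s"
    and "card (reduce2 k (reduce1 k (rect_subsets L))) > 2 * k ^ 3"
  shows "\<not> (\<exists>L'. is_cover L' (rect_subsets L) L \<and> card L' \<le> k)"
proof
  assume "\<exists>L'. is_cover L' (rect_subsets L) L \<and> card L' \<le> k"
  then obtain L' where L'L: "L' \<subseteq> L" and cov: "\<forall>S\<in>rect_subsets L. S \<inter> L' \<noteq> {}"
    and ck: "card L' \<le> k" unfolding is_cover_def by auto
  define C where "C = rect_subsets L"
  define C1 where "C1 = reduce1 k C"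
  define C2 where "C2 = reduce2 k C1"
  have fin: "finite L" and ax: "\<forall>s\<in>L. axis_segment s" using assms by auto
  have finL': "finite L'" using L'L fin finite_subset by auto
  have CP: "C \<subseteq> Pow L" unfolding C_def by (rule rect_subsets_Pow)
  have finC: "finite C" using CP fin finite_subset by blast
  have big: "card C2 > 2 * k ^ 3" using assms(3) unfolding C2_def C1_def C_def .
  show False
  proof (cases "k = 0")
    case True
    hence "L' = {}" using ck finL' by auto
    hence "C = {}" using cov unfolding C_def by auto
    hence "C1 = {}" unfolding C1_def reduce1_def heavy_pair_def by auto
    hence "C2 = {}" unfolding C2_def reduce2_def heavy_elem_def by auto
    thus False using big by simp
  next
    case False
    hence k1: "k \<ge> 1" by simp
    have covA: "S \<inter> L' \<noteq> {}" if S: "S \<in> C1" for S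
    proof (cases "S \<in> C")
      case True thus ?thesis using cov unfolding C_def by auto
    next
      case False
      then obtain l l' where hp: "heavy_pair k C l l'" and Seq: "S = {l, l'}"
        using S unfolding C1_def reduce1_def by auto
      show ?thesis
      proof (rule ccontr)
        assume "\<not> S \<inter> L' \<noteq> {}"
        hence nl: "l \<notin> L'" "l' \<notin> L'" using Seq by auto
        define D where "D = {S \<in> C. l \<in> S \<and> l' \<in> S}"
        have finD: "finite D" unfolding D_def using finC by auto
        have cD: "card D > 2 * k" using hp unfolding heavy_pair_def D_def by auto
        have "D \<subseteq> (\<Union>m\<in>L'. {T \<in> D. m \<in> T})" using cov unfolding D_def C_def by blast
        moreover have "finite (\<Union>m\<in>L'. {T \<in> D. m \<in> T})" using finL' finD by auto
        ultimately have "card D \<le> card (\<Union>m\<in>L'. {T \<in> D. m \<in> T})"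
          by (intro card_mono)
        also have "\<dots> \<le> (\<Sum>m\<in>L'. card {T \<in> D. m \<in> T})" using finL' by (rule card_UN_le)
        finally have cle: "card D \<le> (\<Sum>m\<in>L'. card {T \<in> D. m \<in> T})" .
        have "\<exists>m\<in>L'. card {T \<in> D. m \<in> T} \<ge> 3"
        proof (rule ccontr)
          assume "\<not> ?thesis"
          hence "\<forall>m\<in>L'. card {T \<in> D. m \<in> T} \<le> 2" by auto
          hence "(\<Sum>m\<in>L'. card {T \<in> D. m \<in> T}) \<le> (\<Sum>m\<in>L'. 2)" by (intro sum_mono) auto
          also have "\<dots> = 2 * card L'" by simp
          also have "\<dots> \<le> 2 * k" using ck by simp
          finally show False using cle cD by simp
        qed
        then obtain m where mL: "m \<in> L'" and c3: "card {T \<in> D. m \<in> T} \<ge> 3" by auto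
        obtain T1 T2 T3 where T: "T1 \<in> {T \<in> D. m \<in> T}" "T2 \<in> {T \<in> D. m \<in> T}"
          "T3 \<in> {T \<in> D. m \<in> T}" "T1 \<noteq> T2" "T1 \<noteq> T3" "T2 \<noteq> T3"
          using three_elems[OF _ c3] finD by auto
        have "l \<noteq> l'" using hp unfolding heavy_pair_def by auto
        moreover have "l \<noteq> m" "l' \<noteq> m" using mL nl by auto
        ultimately show False
          using no_triple[OF fin ax, of T1 T2 T3 l l' m] T unfolding D_def C_def by auto
      qed
    qed
    have C1P: "C1 \<subseteq> Pow L"
    proof
      fix S assume S: "S \<in> C1"
      show "S \<in> Pow L"
      proof (cases "S \<in> C")
        case True thus ?thesis using CP by auto
      next
        case False
        then obtain l l' where hp: "heavy_pair k C l l'" and Seq: "S = {l, l'}"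
          using S unfolding C1_def reduce1_def by auto
        have "card {T \<in> C. l \<in> T \<and> l' \<in> T} > 0" using hp unfolding heavy_pair_def by auto
        then obtain T where "T \<in> C" "l \<in> T" "l' \<in> T" by (metis (no_types, lifting) card_gt_0_iff empty_Collect_eq)
        thus ?thesis using CP Seq by auto
      qed
    qed
    have finC1: "finite C1" using C1P fin finite_subset by blast
    have pairb: "card {S \<in> C1. m \<in> S \<and> m' \<in> S} \<le> 2 * k" if mm: "m \<noteq> m'" for m m'
    proof (cases "heavy_pair k C m m'")
      case True
      have "{S \<in> C1. m \<in> S \<and> m' \<in> S} \<subseteq> {{m, m'}}"
      proof
        fix S assume S: "S \<in> {S \<in> C1. m \<in> S \<and> m' \<in> S}"
        have "S \<notin> {S \<in> C. \<not> (\<exists>l l'. heavy_pair k C l l' \<and> l \<in> S \<and> l' \<in> S)}"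
          using S True by auto
        then obtain l l' where "heavy_pair k C l l'" "S = {l, l'}"
          using S unfolding C1_def reduce1_def by auto
        thus "S \<in> {{m, m'}}" using S mm by auto
      qed
      hence "card {S \<in> C1. m \<in> S \<and> m' \<in> S} \<le> card {{m, m'}}" by (intro card_mono) auto
      thus ?thesis using k1 by simp
    next
      case False
      have "{S \<in> C1. m \<in> S \<and> m' \<in> S} \<subseteq> {S \<in> C. m \<in> S \<and> m' \<in> S}"
      proof
        fix S assume S: "S \<in> {S \<in> C1. m \<in> S \<and> m' \<in> S}"
        show "S \<in> {S \<in> C. m \<in> S \<and> m' \<in> S}"
        proof (rule ccontr)
          assume "S \<notin> {S \<in> C. m \<in> S \<and> m' \<in> S}"
          then obtain l l' where hp: "heavy_pair k C l l'" "S = {l, l'}"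
            using S unfolding C1_def reduce1_def by auto
          hence "(l = m \<and> l' = m') \<or> (l = m' \<and> l' = m)" using S mm by auto
          thus False using hp False heavy_pair_sym by metis
        qed
      qed
      hence "card {S \<in> C1. m \<in> S \<and> m' \<in> S} \<le> card {S \<in> C. m \<in> S \<and> m' \<in> S}"
        using finC by (intro card_mono) auto
      also have "\<dots> \<le> 2 * k" using False mm unfolding heavy_pair_def by auto
      finally show ?thesis .
    qed
    have heavyL: "l \<in> L'" if hl: "heavy_elem k C1 l" for l
    proof (rule ccontr)
      assume nl: "l \<notin> L'"
      define D where "D = {S \<in> C1. l \<in> S}"
      have finD: "finite D" unfolding D_def using finC1 by auto
      have "D \<subseteq> (\<Union>m\<in>L'. {S \<in> C1. l \<in> S \<and> m \<in> S})" using covA unfolding D_def by blast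
      moreover have "finite (\<Union>m\<in>L'. {S \<in> C1. l \<in> S \<and> m \<in> S})" using finL' finC1 by auto
      ultimately have "card D \<le> card (\<Union>m\<in>L'. {S \<in> C1. l \<in> S \<and> m \<in> S})"
        by (intro card_mono)
      also have "\<dots> \<le> (\<Sum>m\<in>L'. card {S \<in> C1. l \<in> S \<and> m \<in> S})" using finL' by (rule card_UN_le)
      also have "\<dots> \<le> (\<Sum>m\<in>L'. 2 * k)" proof (rule sum_mono)
        fix m assume "m \<in> L'"
        hence "l \<noteq> m" using nl by auto
        thus "card {S \<in> C1. l \<in> S \<and> m \<in> S} \<le> 2 * k" by (rule pairb)
      qed
      also have "\<dots> = card L' * (2 * k)" by simp
      also have "\<dots> \<le> k * (2 * k)" using ck by simp
      also have "\<dots> = 2 * k ^ 2" by (simp add: power2_eq_square)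
      finally show False using hl unfolding heavy_elem_def D_def by simp
    qed
    have C2P: "C2 \<subseteq> Pow L"
    proof
      fix S assume S: "S \<in> C2"
      show "S \<in> Pow L"
      proof (cases "S \<in> C1")
        case True thus ?thesis using C1P by auto
      next
        case False
        then obtain l where hl: "heavy_elem k C1 l" and Seq: "S = {l}"
          using S unfolding C2_def reduce2_def by auto
        have "l \<in> L'" using heavyL hl by auto
        thus ?thesis using L'L Seq by auto
      qed
    qed
    have finC2: "finite C2" using C2P fin finite_subset by blast
    have elb: "card {S \<in> C2. m \<in> S} \<le> 2 * k ^ 2" for m
    proof (cases "heavy_elem k C1 m")
      case True
      have "{S \<in> C2. m \<in> S} \<subseteq> {{m}}"
      proof
        fix S assume S: "S \<in> {S \<in> C2. m \<in> S}"
        have "S \<notin> {S \<in> C1. \<not> (\<exists>l\<in>S. heavy_elem k C1 l)}" using S True by auto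
        then obtain l where "heavy_elem k C1 l" "S = {l}" using S unfolding C2_def reduce2_def by auto
        thus "S \<in> {{m}}" using S by auto
      qed
      hence "card {S \<in> C2. m \<in> S} \<le> card {{m}}" by (intro card_mono) auto
      moreover have "1 \<le> k ^ 2" using k1 by simp
      ultimately show ?thesis by simp
    next
      case False
      have "{S \<in> C2. m \<in> S} \<subseteq> {S \<in> C1. m \<in> S}"
      proof
        fix S assume S: "S \<in> {S \<in> C2. m \<in> S}"
        show "S \<in> {S \<in> C1. m \<in> S}"
        proof (rule ccontr)
          assume "S \<notin> {S \<in> C1. m \<in> S}"
          then obtain l where "heavy_elem k C1 l" "S = {l}" using S unfolding C2_def reduce2_def by auto
          thus False using S False by auto
        qed
      qed
      hence "card {S \<in> C2. m \<in> S} \<le> card {S \<in> C1. m \<in> S}" using finC1 by (intro card_mono) auto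
      also have "\<dots> \<le> 2 * k ^ 2" using False unfolding heavy_elem_def by auto
      finally show ?thesis .
    qed
    have "C2 \<subseteq> (\<Union>m\<in>L'. {S \<in> C2. m \<in> S})"
    proof
      fix S assume S: "S \<in> C2"
      have "S \<inter> L' \<noteq> {}"
      proof (cases "S \<in> C1")
        case True thus ?thesis using covA by auto
      next
        case False
        then obtain l where hl: "heavy_elem k C1 l" and Seq: "S = {l}"
          using S unfolding C2_def reduce2_def by auto
        thus ?thesis using heavyL by auto
      qed
      thus "S \<in> (\<Union>m\<in>L'. {S \<in> C2. m \<in> S})" using S by auto
    qed
    moreover have "finite (\<Union>m\<in>L'. {S \<in> C2. m \<in> S})" using finL' finC2 by auto
    ultimately have "card C2 \<le> card (\<Union>m\<in>L'. {S \<in> C2. m \<in> S})"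
      by (intro card_mono)
    also have "\<dots> \<le> (\<Sum>m\<in>L'. card {S \<in> C2. m \<in> S})" using finL' by (rule card_UN_le)
    also have "\<dots> \<le> (\<Sum>m\<in>L'. 2 * k ^ 2)" using elb by (intro sum_mono) auto
    also have "\<dots> = card L' * (2 * k ^ 2)" by simp
    also have "\<dots> \<le> k * (2 * k ^ 2)" using ck by simp
    also have "\<dots> = 2 * k ^ 3" by (simp add: power3_eq_cube power2_eq_square)
    finally show False using big by simp
  qed
qed

end
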